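(* Let $P$ be a set of $n$ points chosen independently and uniformly at random from the hypercube $[-2,2]^d$, and let $C$ be the closed ball of radius $1$ centered at the origin. Then $\mathbb{E}[\operatorname{price}(P,C)]\geq \mathbb{E}[f_0(F_{\mathrm{in}})]=\Omega(n^{1-2/(d+1)})$, where the $\Omega$ hides constants depending on $d$.
   Context: For a closed convex $d$-dimensional polytope $F$, $f_k(F)$ denotes its number of $k$-dimensional faces. The inner fence $F_{\mathrm{in}}$ is a closed convex $d$-dimensional polytope with the minimum number of vertices such that $F_{\mathrm{in}}\subseteq C$ and $C\cap P=F_{\mathrm{in}}\cap P$. The outer fence $F_{\mathrm{out}}$ is a closed convex $d$-dimensional polytope with the minimum number of facets such that $C\subseteq F_{\mathrm{out}}$ and $C\cap P=F_{\mathrm{out}}\cap P$. The separation price is $\operatorname{price}(P,C)=f_0(F_{\mathrm{in}})+f_{d-1}(F_{\mathrm{out}})$. *)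

theory Defs
  imports "HOL-Probability.Probability"
begin

definition num_faces :: "nat \<Rightarrow> 'a::euclidean_space set \<Rightarrow> nat" where
  "num_faces k F = card {G. G face_of F \<and> aff_dim G = int k}"

definition full_polytope :: "'a::euclidean_space set \<Rightarrow> bool" where
  "full_polytope F \<longleftrightarrow> polytope F \<and> aff_dim F = int DIM('a)"

definition inner_admissible :: "'a::euclidean_space set \<Rightarrow> 'a set \<Rightarrow> 'a set \<Rightarrow> bool" where
  "inner_admissible P C F \<longleftrightarrow> full_polytope F \<and> F \<subseteq> C \<and> C \<inter> P = F \<inter> P"

definition outer_admissible :: "'a::euclidean_space set \<Rightarrow> 'a set \<Rightarrow> 'a set \<Rightarrow> bool" where
  "outer_admissible P C F \<longleftrightarrow> full_polytope F \<and> C \<subseteq> F \<and> C \<inter> P = F \<inter> P"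

definition is_inner_fence :: "'a::euclidean_space set \<Rightarrow> 'a set \<Rightarrow> 'a set \<Rightarrow> bool" where
  "is_inner_fence P C F \<longleftrightarrow> inner_admissible P C F \<and>
     (\<forall>G. inner_admissible P C G \<longrightarrow> num_faces 0 F \<le> num_faces 0 G)"

definition is_outer_fence :: "'a::euclidean_space set \<Rightarrow> 'a set \<Rightarrow> 'a set \<Rightarrow> bool" where
  "is_outer_fence P C F \<longleftrightarrow> outer_admissible P C F \<and>
     (\<forall>G. outer_admissible P C G \<longrightarrow>
        num_faces (DIM('a) - 1) F \<le> num_faces (DIM('a) - 1) G)"

definition inner_fence :: "'a::euclidean_space set \<Rightarrow> 'a set \<Rightarrow> 'a set" where
  "inner_fence P C = (SOME F. is_inner_fence P C F)"

definition outer_fence :: "'a::euclidean_space set \<Rightarrow> 'a set \<Rightarrow> 'a set" where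
  "outer_fence P C = (SOME F. is_outer_fence P C F)"

definition price :: "'a::euclidean_space set \<Rightarrow> 'a set \<Rightarrow> nat" where
  "price P C = num_faces 0 (inner_fence P C)
             + num_faces (DIM('a) - 1) (outer_fence P C)"

definition cube_sample :: "nat \<Rightarrow> (nat \<Rightarrow> 'a::euclidean_space) measure" where
  "cube_sample n = PiM {..<n} (\<lambda>_. uniform_measure lborel (cbox (- (2 *\<^sub>R One)) (2 *\<^sub>R One)))"

end

theory Submission
  imports Defs "HOL-Analysis.Analysis"
begin



lemma inner_adm_exists:
  fixes P :: "'a::euclidean_space set"
  assumes "finite P"
  shows "\<exists>F. inner_admissible P (cball 0 1) F"
proof -
  define S :: "'a set" where "S = insert 0 ((\<lambda>b. (1/2) *\<^sub>R b) ` Basis)"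
  define F where "F = convex hull ((P \<inter> cball 0 1) \<union> S)"
  have finS: "finite S" by (simp add: S_def)
  have Sb: "S \<subseteq> cball 0 1" by (auto simp: S_def)
  have "affine hull S = span S"
    by (rule affine_hull_span_0) (simp add: S_def hull_inc)
  moreover have "Basis \<subseteq> span S"
  proof
    fix b :: 'a assume b: "b \<in> Basis"
    have "(1/2) *\<^sub>R b \<in> span S" using b by (auto simp: S_def intro!: span_base)
    then have "2 *\<^sub>R ((1/2) *\<^sub>R b) \<in> span S" by (rule span_mul)
    then show "b \<in> span S" by simp
  qed
  ultimately have "affine hull S = UNIV"
    by (metis span_Basis span_minimal subspace_span top.extremum_uniqueI)
  then have aS: "aff_dim S = DIM('a)" using aff_dim_eq_full by blast
  have "aff_dim S \<le> aff_dim ((P \<inter> cball 0 1) \<union> S)" by (rule aff_dim_subset) auto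
  then have "aff_dim F = DIM('a)"
    using aS aff_dim_le_DIM[of F] by (simp add: F_def aff_dim_convex_hull)
  moreover have "polytope F" unfolding F_def polytope_def
    by (rule exI[of _ "(P \<inter> cball 0 1) \<union> S"]) (use finS assms in auto)
  moreover have FC: "F \<subseteq> cball 0 1" unfolding F_def
    by (rule hull_minimal) (use Sb in auto)
  moreover have "cball 0 1 \<inter> P = F \<inter> P"
    using FC hull_subset[of "(P \<inter> cball 0 1) \<union> S" convex] by (auto simp: F_def)
  ultimately show ?thesis unfolding inner_admissible_def full_polytope_def by blast
qed

lemma inner_fence_adm:
  fixes P :: "'a::euclidean_space set"
  assumes "finite P"
  shows "inner_admissible P (cball 0 1) (inner_fence P (cball 0 1))"
proof -
  let ?Q = "\<lambda>k. \<exists>F. inner_admissible P (cball (0::'a) 1) F \<and> num_faces 0 F = k"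
  obtain F0 where "inner_admissible P (cball 0 1) F0" using inner_adm_exists[OF assms] by blast
  then have "?Q (num_faces 0 F0)" by blast
  then have "?Q (LEAST k. ?Q k)" by (rule LeastI)
  then obtain F where F: "inner_admissible P (cball 0 1) F" "num_faces 0 F = (LEAST k. ?Q k)" by blast
  have "is_inner_fence P (cball 0 1) F"
    unfolding is_inner_fence_def using F by (auto intro: Least_le)
  then have "is_inner_fence P (cball 0 1) (inner_fence P (cball 0 1))"
    unfolding inner_fence_def by (rule someI)
  then show ?thesis by (simp add: is_inner_fence_def)
qed




lemma vertex_count:
  fixes F :: "'a::euclidean_space set" and I :: "'i set"
  assumes adm: "inner_admissible P (cball 0 1) F"
    and finI: "finite I"
    and disj: "\<And>i j v. i \<in> I \<Longrightarrow> j \<in> I \<Longrightarrow> v \<in> cball 0 1 \<Longrightarrow> inner (u i) v \<ge> c i \<Longrightarrow> inner (u j) v \<ge> c j \<Longrightarrow> i = j"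
    and R: "\<And>i x. i \<in> I \<Longrightarrow> x \<in> R i \<Longrightarrow> x \<in> cball 0 1 \<and> inner (u i) x \<ge> c i"
  shows "card {i\<in>I. P \<inter> R i \<noteq> {}} \<le> num_faces 0 F"
proof -
  have polyF: "polytope F" and FC: "F \<subseteq> cball 0 1" and CP: "cball 0 1 \<inter> P = F \<inter> P"
    using adm by (auto simp: inner_admissible_def full_polytope_def)
  obtain V where V: "finite V" "F = convex hull V" using polyF unfolding polytope_def by blast
  define E where "E = {v. v extreme_point_of F}"
  have FE: "F = convex hull E" using Krein_Milman_polytope[OF V(1)] V(2) by (simp add: E_def)
  have ex: "\<exists>v\<in>E. inner (u i) v \<ge> c i" if iI: "i \<in> I" and ne: "P \<inter> R i \<noteq> {}" for i
  proof (rule ccontr)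
    assume "\<not> ?thesis"
    then have "E \<subseteq> {x. inner (u i) x < c i}" by (auto simp: not_le)
    then have "convex hull E \<subseteq> {x. inner (u i) x < c i}"
      by (rule hull_minimal) (rule convex_halfspace_lt)
    moreover obtain p where p: "p \<in> P" "p \<in> R i" using ne by blast
    moreover have "p \<in> F" using R[OF iI p(2)] p(1) CP by blast
    ultimately show False using R[OF iI p(2)] FE by auto
  qed
  define w where "w i = (SOME v. v \<in> E \<and> inner (u i) v \<ge> c i)" for i
  have w: "w i \<in> E \<and> inner (u i) (w i) \<ge> c i" if "i \<in> I" "P \<inter> R i \<noteq> {}" for i
    unfolding w_def using ex[OF that] by (metis (mono_tags, lifting) someI_ex)
  have wC: "w i \<in> cball 0 1" if "i \<in> I" "P \<inter> R i \<noteq> {}" for i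
    using w[OF that] FC by (auto simp: E_def extreme_point_of_def)
  have "card {i\<in>I. P \<inter> R i \<noteq> {}} \<le> card {G. G face_of F \<and> aff_dim G = int 0}"
  proof (rule card_inj_on_le[where f = "\<lambda>i. {w i}"])
    show "inj_on (\<lambda>i. {w i}) {i \<in> I. P \<inter> R i \<noteq> {}}"
    proof (rule inj_onI)
      fix i j assume i: "i \<in> {i \<in> I. P \<inter> R i \<noteq> {}}" and j: "j \<in> {i \<in> I. P \<inter> R i \<noteq> {}}"
        and eq: "{w i} = {w j}"
      then have "w i = w j" by simp
      then show "i = j" using disj[of i j "w i"] w[of i] w[of j] wC[of i] i j by auto
    qed
    show "(\<lambda>i. {w i}) ` {i \<in> I. P \<inter> R i \<noteq> {}} \<subseteq> {G. G face_of F \<and> aff_dim G = int 0}"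
      using w by (auto simp: face_of_singleton E_def) blast
    show "finite {G. G face_of F \<and> aff_dim G = int 0}"
      using finite_polytope_faces[OF polyF] by simp
  qed
  then show ?thesis by (simp add: num_faces_def)
qed




lemma one_minus_pow_le: 
  fixes n :: nat assumes "n \<ge> 1" "q \<ge> 1 / real n" "q \<le> 1"
  shows "(1 - q) ^ n \<le> 1/2"
proof -
  have "(1 - q) ^ n \<le> (exp (- q)) ^ n"
    by (rule power_mono) (use exp_ge_add_one_self[of "-q"] assms in auto)
  also have "\<dots> = exp (- q * real n)" by (simp add: exp_of_nat_mult[symmetric] mult.commute)
  also have "\<dots> \<le> exp (-1)"
  proof -
    have "q * real n \<ge> 1" using assms by (simp add: field_simps)
    then show ?thesis by simp
  qed
  also have "\<dots> \<le> 1/2"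
  proof -
    have "2 \<le> exp (1::real)" using exp_ge_add_one_self[of 1] by simp
    then show ?thesis by (simp add: exp_minus field_simps)
  qed
  finally show ?thesis .
qed

lemma cube_emeasure:
  "emeasure lborel (cbox (- (2 *\<^sub>R One)) (2 *\<^sub>R (One::'a::euclidean_space))) = ennreal (4 ^ DIM('a))"
proof -
  have "\<forall>b\<in>(Basis::'a set). (2 *\<^sub>R One + 2 *\<^sub>R One) \<bullet> b = (4::real)"
    by (simp add: inner_add_left)
  then have "(\<Prod>b\<in>(Basis::'a set). (2 *\<^sub>R One + 2 *\<^sub>R One) \<bullet> b) = (\<Prod>b\<in>(Basis::'a set). (4::real))"
    by (intro prod.cong) auto
  then show ?thesis by (simp add: emeasure_lborel_cbox_eq inner_diff_left prod_ennreal)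
qed

lemma hit_prob:
  fixes B :: "'a::euclidean_space set" and n :: nat
  assumes B[measurable]: "B \<in> sets borel" and n: "n \<ge> 1"
    and q: "measure (uniform_measure lborel (cbox (- (2 *\<^sub>R One)) (2 *\<^sub>R (One::'a)))) B \<ge> 1 / real n"
  shows "emeasure (cube_sample n) {p \<in> space (cube_sample n). \<exists>i<n. p i \<in> B} \<ge> ennreal (1/2)"
proof -
  define U where "U = uniform_measure lborel (cbox (- (2 *\<^sub>R One)) (2 *\<^sub>R (One::'a)))"
  have "prob_space U" unfolding U_def
    by (rule prob_space_uniform_measure) (simp_all add: cube_emeasure)
  then interpret U: prob_space U .
  interpret PP: product_prob_space "\<lambda>_. U" "{..<n}"
    by unfold_locales
  have M: "cube_sample n = PiM {..<n} (\<lambda>_. U)" by (simp add: cube_sample_def U_def)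
  have BU[measurable]: "B \<in> sets U" by (simp add: U_def)
  let ?A = "{p \<in> space (PiM {..<n} (\<lambda>_. U)). \<exists>i<n. p i \<in> B}"
  have Ameas: "?A \<in> sets (PiM {..<n} (\<lambda>_. U))" by measurable
  have eq1: "space (PiM {..<n} (\<lambda>_. U)) - ?A = {p \<in> space (PiM {..<n} (\<lambda>_. U)). \<forall>i\<in>{..<n}. p i \<in> space U - B}"
    by (auto simp: space_PiM U_def)
  have eq2: "emeasure (PiM {..<n} (\<lambda>_. U)) {p \<in> space (PiM {..<n} (\<lambda>_. U)). \<forall>i\<in>{..<n}. p i \<in> space U - B} = (\<Prod>i\<in>{..<n}. emeasure U (space U - B))"
    by (rule PP.emeasure_PiM_Collect) auto
  have e3: "emeasure (PiM {..<n} (\<lambda>_. U)) (space (PiM {..<n} (\<lambda>_. U)) - ?A) = (\<Prod>i\<in>{..<n}. emeasure U (space U - B))"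
    unfolding eq1 by (rule eq2)
  have e4: "PP.prob (space (PiM {..<n} (\<lambda>_. U)) - ?A) = enn2real (\<Prod>i\<in>{..<n}. emeasure U (space U - B))"
    unfolding measure_def e3 by (rule refl)
  have pr: "(\<Prod>i\<in>{..<n}. emeasure U (space U - B)) = ennreal ((U.prob (space U - B)) ^ n)"
    by (simp add: U.emeasure_eq_measure ennreal_power)
  have "PP.prob (space (PiM {..<n} (\<lambda>_. U)) - ?A) = (U.prob (space U - B)) ^ n"
    unfolding e4 pr by simp
  also have "\<dots> = (1 - U.prob B) ^ n" using U.prob_compl[OF BU] by simp
  also have "\<dots> \<le> 1/2" by (rule one_minus_pow_le) (use n q U.prob_le_1 in \<open>auto simp: U_def\<close>)
  finally have "PP.prob (space (PiM {..<n} (\<lambda>_. U)) - ?A) \<le> 1/2" .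
  then have "PP.prob ?A \<ge> 1/2" using PP.prob_compl[OF Ameas] by simp
  then have "ennreal (1/2) \<le> ennreal (PP.prob ?A)" by (rule ennreal_leI)
  then show ?thesis unfolding M using PP.emeasure_eq_measure[of ?A] by simp
qed




definition vec :: "('a::euclidean_space \<Rightarrow> real) \<Rightarrow> 'a" where
  "vec c = (\<Sum>b\<in>Basis. c b *\<^sub>R b)"

lemma vec_coord: "b \<in> Basis \<Longrightarrow> vec c \<bullet> b = c b"
  by (simp add: vec_def inner_sum_left inner_Basis if_distrib cong: if_cong)

lemma vec_norm2: "norm (vec c)^2 = (\<Sum>b\<in>Basis. (c b)^2)"
proof -
  have "norm (vec c)^2 = vec c \<bullet> vec c" by (simp add: power2_norm_eq_inner)
  also have "\<dots> = (\<Sum>b\<in>Basis. (vec c \<bullet> b) * (vec c \<bullet> b))" by (rule euclidean_inner)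
  also have "\<dots> = (\<Sum>b\<in>Basis. (c b)^2)" by (simp add: vec_coord power2_eq_square)
  finally show ?thesis .
qed

lemma vec_diff: "vec c - vec c' = vec (\<lambda>b. c b - c' b)"
  by (simp add: vec_def sum_subtractf scaleR_diff_left)

definition reflect :: "'a::euclidean_space \<Rightarrow> 'a \<Rightarrow> 'a" where
  "reflect w x = x - (2 * (x \<bullet> w) / (w \<bullet> w)) *\<^sub>R w"

lemma reflect_inner: "reflect w x \<bullet> reflect w y = x \<bullet> y"
proof (cases "w = 0")
  case True then show ?thesis by (simp add: reflect_def)
next
  case False
  then have "w \<bullet> w \<noteq> 0" by simp
  then show ?thesis
    by (simp add: reflect_def inner_diff_left inner_diff_right field_simps inner_commute)
qed

lemma reflect_diff: "reflect w x - reflect w y = reflect w (x - y)"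
  by (simp add: reflect_def inner_diff_left algebra_simps diff_divide_distrib)

lemma reflect_norm: "norm (reflect w x) = norm x"
  by (simp add: norm_eq_sqrt_inner reflect_inner)

lemma reflect_swap:
  assumes "norm a = 1" "norm u = 1"
  shows "reflect (a - u) a = u"
proof (cases "a = u")
  case True then show ?thesis by (simp add: reflect_def)
next
  case False
  have aa: "a \<bullet> a = 1" and uu: "u \<bullet> u = 1" using assms by (simp_all add: norm_eq_1)
  have ww: "(a - u) \<bullet> (a - u) = 2 - 2 * (a \<bullet> u)"
    using aa uu by (simp add: inner_diff_left inner_diff_right inner_commute)
  have "(a - u) \<bullet> (a - u) \<noteq> 0" using False by simp
  then have nz: "2 - 2 * (a \<bullet> u) \<noteq> 0" using ww by simp
  have au: "a \<bullet> (a - u) = 1 - a \<bullet> u" using aa by (simp add: inner_diff_right)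
  have "2 * (1 - a \<bullet> u) / (2 - 2 * (a \<bullet> u)) = 1"
    using nz by (simp add: field_simps)
  then have h: "2 * (a \<bullet> (a - u)) / ((a - u) \<bullet> (a - u)) = 1"
    unfolding au ww .
  show ?thesis unfolding reflect_def h by simp
qed




locale geo =
  fixes t :: real and b0 :: "'a::euclidean_space"
  assumes t_pos: "0 < t" and t_le: "t \<le> 1" and b0: "b0 \<in> Basis"
begin

definition "BB = Basis - {b0}"
definition "K = nat \<lfloor>1 / (t * real (card (insert b0 Basis)))\<rfloor>"
definition "G = PiE BB (\<lambda>_. {- int K..int K})"
definition "S g = (\<Sum>b\<in>BB. (real_of_int (g b))^2)"
definition "u g = (vec (\<lambda>b. if b = b0 then sqrt (1 - t^2 * S g) else t * real_of_int (g b)) :: 'a)"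
definition "hh = t^2/16"
definition "r = hh/4"
definition "z k = (vec (\<lambda>b. if b = b0 then 1 - hh/2 else 2 * r * real_of_int (k b)) :: 'a)"
definition "D g k = ball (reflect (b0 - u g) (z k)) r"
definition "R g = (\<Union>k\<in>G. D g k)"

lemma K_def': "K = nat \<lfloor>1 / (t * DIM('a))\<rfloor>"
  using b0 by (simp add: K_def insert_absorb)

lemma finBB: "finite BB" by (simp add: BB_def)
lemma cardBB: "card BB = DIM('a) - 1" using b0 by (simp add: BB_def)
lemma finG: "finite G" by (simp add: G_def finBB finite_PiE)
lemma cardG: "card G = (2 * K + 1) ^ (DIM('a) - 1)"
proof -
  have "card G = (\<Prod>b\<in>BB. card {- int K..int K})" by (simp add: G_def card_PiE finBB)
  also have "card {- int K..int K} = 2 * K + 1" by simp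
  then have "(\<Prod>b\<in>BB. card {- int K..int K}) = (2 * K + 1) ^ (DIM('a) - 1)" by (simp add: cardBB)
  finally show ?thesis .
qed

lemma K_le: "real K \<le> 1 / (t * DIM('a))"
proof -
  have "0 \<le> 1 / (t * DIM('a))" using t_pos by simp
  then show ?thesis unfolding K_def' by linarith
qed

lemma S_nonneg: "0 \<le> S g" by (simp add: S_def sum_nonneg)

lemma S_bound: assumes g: "g \<in> G" shows "t^2 * S g \<le> 1"
proof -
  have "(real_of_int (g b))^2 \<le> (1 / (t * DIM('a)))^2" if "b \<in> BB" for b
  proof -
    have "\<bar>g b\<bar> \<le> int K" using g that by (auto simp: G_def PiE_iff)
    then have "\<bar>real_of_int (g b)\<bar> \<le> 1 / (t * DIM('a))" using K_le by linarith
    then show ?thesis by (metis abs_ge_zero power2_abs power_mono)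
  qed
  then have "S g \<le> real (card BB) * (1 / (t * DIM('a)))^2"
    unfolding S_def using sum_bounded_above[of BB "\<lambda>b. (real_of_int (g b))^2"] by auto
  also have "\<dots> \<le> real DIM('a) * (1 / (t * DIM('a)))^2"
    by (rule mult_right_mono) (auto simp: cardBB)
  also have "\<dots> = 1 / (t^2 * DIM('a))" using t_pos by (simp add: field_simps power2_eq_square)
  finally have "t^2 * S g \<le> t^2 * (1 / (t^2 * DIM('a)))"
    by (rule mult_left_mono) simp
  also have "\<dots> \<le> 1" using t_pos by (simp add: field_simps)
  finally show ?thesis .
qed

lemma sum_split: "(\<Sum>b\<in>Basis. f b) = f b0 + (\<Sum>b\<in>BB. f b)"
  unfolding BB_def using b0 by (simp add: sum.remove)

lemma u_norm: assumes "g \<in> G" shows "norm (u g) = 1"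
proof -
  have "norm (u g)^2 = (sqrt (1 - t^2 * S g))^2 + (\<Sum>b\<in>BB. (t * real_of_int (g b))^2)"
    unfolding u_def vec_norm2 sum_split by (simp add: BB_def)
  also have "\<dots> = 1 - t^2 * S g + t^2 * S g"
    using S_bound[OF assms] by (simp add: S_def power_mult_distrib sum_distrib_left)
  finally show ?thesis using power2_eq_1_iff[of "norm (u g)"] norm_ge_zero[of "u g"] by auto
qed

lemma u_sep: assumes "g \<in> G" "g' \<in> G" "g \<noteq> g'" shows "t \<le> norm (u g - u g')"
proof -
  have "\<exists>b\<in>BB. g b \<noteq> g' b"
  proof (rule ccontr)
    assume "\<not> ?thesis"
    then have "g = g'" using assms
      by (intro PiE_ext[of g BB "\<lambda>_. {-int K..int K}" g']) (auto simp: G_def)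
    then show False using assms(3) by simp
  qed
  then obtain b where b: "b \<in> BB" "g b \<noteq> g' b" by blast
  then have bB: "b \<in> Basis" "b \<noteq> b0" by (auto simp: BB_def)
  have "1 \<le> \<bar>real_of_int (g b) - real_of_int (g' b)\<bar>" using b(2) by linarith
  then have "t \<le> \<bar>t * real_of_int (g b) - t * real_of_int (g' b)\<bar>"
    using t_pos by (simp add: right_diff_distrib[symmetric] abs_mult)
  also have "\<dots> = \<bar>(u g - u g') \<bullet> b\<bar>" using bB by (simp add: u_def inner_diff_left vec_coord)
  also have "\<dots> \<le> norm (u g - u g')" by (rule Basis_le_norm[OF bB(1)])
  finally show ?thesis .
qed

lemma hh_pos: "0 < hh" using t_pos by (simp add: hh_def)
lemma hh_le: "hh \<le> 1/16" using t_pos t_le by (simp add: hh_def power_le_one)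
lemma r_pos: "0 < r" using hh_pos by (simp add: r_def)

lemma z_norm: assumes k: "k \<in> G" shows "norm (z k) \<le> 1 - r"
proof -
  have "norm (z k)^2 = (1 - hh/2)^2 + (\<Sum>b\<in>BB. (2 * r * real_of_int (k b))^2)"
    unfolding z_def vec_norm2 sum_split by (simp add: BB_def)
  also have "(\<Sum>b\<in>BB. (2 * r * real_of_int (k b))^2) = (hh^2/4) * S k"
    unfolding S_def sum_distrib_left
    by (intro sum.cong refl) (simp add: r_def power2_eq_square algebra_simps)
  also have "(hh^2/4) * S k = (hh/64) * (t^2 * S k)"
    by (simp add: hh_def power2_eq_square)
  also have "\<dots> \<le> (hh/64) * 1"
    by (rule mult_left_mono) (use S_bound[OF k] hh_pos in auto)
  finally have "norm (z k)^2 \<le> (1 - hh/2)^2 + hh/64" by simp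
  also have "\<dots> \<le> (1 - r)^2"
    using hh_pos hh_le by (simp add: r_def power2_eq_square field_simps)
  finally show ?thesis
    by (rule power2_le_imp_le) (use hh_le in \<open>simp add: r_def\<close>)
qed

lemma z_b0: "z k \<bullet> b0 = 1 - hh/2"
  using b0 by (simp add: z_def vec_coord)

lemma z_sep: assumes "k \<in> G" "k' \<in> G" "k \<noteq> k'" shows "2 * r \<le> norm (z k - z k')"
proof -
  have "\<exists>b\<in>BB. k b \<noteq> k' b"
  proof (rule ccontr)
    assume "\<not> ?thesis"
    then have "k = k'" using assms
      by (intro PiE_ext[of k BB "\<lambda>_. {-int K..int K}" k']) (auto simp: G_def)
    then show False using assms(3) by simp
  qed
  then obtain b where b: "b \<in> BB" "k b \<noteq> k' b" by blast
  then have bB: "b \<in> Basis" "b \<noteq> b0" by (auto simp: BB_def)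
  have "1 \<le> \<bar>real_of_int (k b) - real_of_int (k' b)\<bar>" using b(2) by linarith
  then have "2 * r \<le> \<bar>2 * r * real_of_int (k b) - 2 * r * real_of_int (k' b)\<bar>"
    using r_pos by (simp add: right_diff_distrib[symmetric] abs_mult)
  also have "\<dots> = \<bar>(z k - z k') \<bullet> b\<bar>" using bB by (simp add: z_def inner_diff_left vec_coord)
  also have "\<dots> \<le> norm (z k - z k')" by (rule Basis_le_norm[OF bB(1)])
  finally show ?thesis .
qed

lemma D_props:
  assumes g: "g \<in> G" and k: "k \<in> G" and x: "x \<in> D g k"
  shows "x \<in> cball 0 1 \<and> 1 - hh \<le> u g \<bullet> x"
proof -
  define f where "f = reflect (b0 - u g)"
  define c where "c = f (z k)"
  have dx: "norm (x - c) < r" using x by (simp add: D_def c_def f_def dist_norm norm_minus_commute)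
  have nc: "norm c \<le> 1 - r" using z_norm[OF k] by (simp add: c_def f_def reflect_norm)
  have "norm x \<le> norm c + norm (x - c)" by (metis add.commute diff_add_cancel norm_triangle_ineq)
  then have "norm x \<le> 1" using dx nc by simp
  have fb0: "f b0 = u g" unfolding f_def by (rule reflect_swap) (use b0 u_norm[OF g] in auto)
  have "u g \<bullet> c = b0 \<bullet> z k" by (metis fb0 c_def f_def reflect_inner)
  also have "\<dots> = 1 - hh/2" using z_b0 by (simp add: inner_commute)
  finally have uc: "u g \<bullet> c = 1 - hh/2" .
  have "\<bar>u g \<bullet> (x - c)\<bar> \<le> norm (u g) * norm (x - c)" by (rule Cauchy_Schwarz_ineq2)
  then have "\<bar>u g \<bullet> (x - c)\<bar> \<le> r" using dx u_norm[OF g] by simp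
  moreover have "u g \<bullet> x = u g \<bullet> c + u g \<bullet> (x - c)" by (simp add: inner_diff_right)
  ultimately have "1 - hh/2 - r \<le> u g \<bullet> x" using uc by linarith
  then have "1 - hh \<le> u g \<bullet> x" using hh_pos by (simp add: r_def)
  with \<open>norm x \<le> 1\<close> show ?thesis by simp
qed

lemma D_disj:
  assumes g: "g \<in> G" and k: "k \<in> G" "k' \<in> G" "k \<noteq> k'"
  shows "D g k \<inter> D g k' = {}"
proof -
  define f where "f = reflect (b0 - u g)"
  have "dist (f (z k)) (f (z k')) = norm (z k - z k')"
    by (simp add: f_def dist_norm reflect_diff reflect_norm)
  then have "2 * r \<le> dist (f (z k)) (f (z k'))" using z_sep[OF k] by simp
  show ?thesis
  proof (rule ccontr)
    assume "D g k \<inter> D g k' \<noteq> {}"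
    then obtain x where "dist (f (z k)) x < r" "dist (f (z k')) x < r"
      by (auto simp: D_def f_def)
    with dist_triangle2[of "f (z k)" "f (z k')" x] \<open>2 * r \<le> dist (f (z k)) (f (z k'))\<close>
    show False by linarith
  qed
qed

lemma cap_disj:
  assumes g: "g \<in> G" "g' \<in> G" and v: "v \<in> cball 0 1" "1 - hh \<le> u g \<bullet> v" "1 - hh \<le> u g' \<bullet> v"
  shows "g = g'"
proof (rule ccontr)
  assume ne: "g \<noteq> g'"
  have cl: "norm (v - u h)^2 \<le> 2 * hh" if "h \<in> G" "1 - hh \<le> u h \<bullet> v" for h
  proof -
    have "norm (v - u h)^2 = norm v ^2 - 2 * (u h \<bullet> v) + norm (u h)^2"
      by (simp add: power2_norm_eq_inner inner_diff_left inner_diff_right inner_commute)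
    moreover have "norm v ^2 \<le> 1" using v(1) by (simp add: power_le_one)
    ultimately show ?thesis using u_norm[OF that(1)] that(2) by simp
  qed
  have "u g - u g' = (v - u g') - (v - u g)" by simp
  then have "norm (u g - u g') \<le> norm (v - u g) + norm (v - u g')"
    by (metis norm_triangle_ineq4 add.commute)
  then have "norm (u g - u g')^2 \<le> (norm (v - u g) + norm (v - u g'))^2"
    by (rule power_mono) simp_all
  also have "\<dots> \<le> 2 * norm (v - u g)^2 + 2 * norm (v - u g')^2"
  proof -
    have "(norm (v - u g) + norm (v - u g'))^2 = 2 * norm (v - u g)^2 + 2 * norm (v - u g')^2 - (norm (v - u g) - norm (v - u g'))^2"
      by (simp add: power2_eq_square algebra_simps)
    then show ?thesis by simp
  qed
  also have "\<dots> \<le> 8 * hh" using cl[OF g(1) v(2)] cl[OF g(2) v(3)] by simp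
  also have "\<dots> < t^2" using t_pos by (simp add: hh_def)
  finally have "norm (u g - u g') < t"
    by (rule power_less_imp_less_base[where n=2]) (use t_pos in auto)
  then show False using u_sep[OF g ne] by simp
qed

lemma R_props: "g \<in> G \<Longrightarrow> x \<in> R g \<Longrightarrow> x \<in> cball 0 1 \<and> 1 - hh \<le> u g \<bullet> x"
  unfolding R_def using D_props by blast

lemma R_borel: "R g \<in> sets lborel"
proof -
  have "open (R g)" unfolding R_def D_def by (intro open_UN ballI open_ball)
  then show ?thesis using borel_open[of "R g"] by simp
qed

lemma R_emeasure: assumes g: "g \<in> G"
  shows "emeasure lborel (R g) = of_nat (card G) * ennreal (unit_ball_vol (DIM('a)) * r ^ DIM('a))"
proof -
  have "emeasure lborel (R g) = (\<Sum>k\<in>G. emeasure lborel (D g k))"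
    unfolding R_def
  proof (rule sum_emeasure[symmetric])
    show "D g ` G \<subseteq> sets lborel" by (auto simp: D_def)
    show "disjoint_family_on (D g) G" using D_disj[OF g] by (auto simp: disjoint_family_on_def)
  qed (rule finG)
  also have "\<dots> = (\<Sum>k\<in>G. ennreal (unit_ball_vol (DIM('a)) * r ^ DIM('a)))"
    by (intro sum.cong refl) (use r_pos in \<open>simp add: D_def emeasure_ball\<close>)
  finally show ?thesis by simp
qed

end



lemma cball_sub_cube: "cball (0::'a::euclidean_space) 1 \<subseteq> cbox (- (2 *\<^sub>R One)) (2 *\<^sub>R One)"
proof
  fix x :: 'a assume "x \<in> cball 0 1"
  then have "norm x \<le> 1" by simp
  then have "\<bar>x \<bullet> b\<bar> \<le> 1" if "b \<in> Basis" for b using Basis_le_norm[OF that, of x] by simp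
  then show "x \<in> cbox (- (2 *\<^sub>R One)) (2 *\<^sub>R One)"
    by (force simp: mem_box inner_minus_left abs_le_iff)
qed

context geo
begin

lemma prob_R: assumes g: "g \<in> G"
  shows "measure (uniform_measure lborel (cbox (- (2 *\<^sub>R One)) (2 *\<^sub>R (One::'a)))) (R g)
     = real (card G) * (unit_ball_vol (DIM('a)) * r ^ DIM('a)) / 4 ^ DIM('a)"
proof -
  have sub: "R g \<subseteq> cbox (- (2 *\<^sub>R One)) (2 *\<^sub>R (One::'a))"
    using R_props[OF g] cball_sub_cube by blast
  have "measure (uniform_measure lborel (cbox (- (2 *\<^sub>R One)) (2 *\<^sub>R (One::'a)))) (R g)
     = measure lborel (cbox (- (2 *\<^sub>R One)) (2 *\<^sub>R (One::'a)) \<inter> R g) / measure lborel (cbox (- (2 *\<^sub>R One)) (2 *\<^sub>R (One::'a)))"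
    by (rule measure_uniform_measure) (use R_borel in \<open>simp_all add: cube_emeasure\<close>)
  also have "cbox (- (2 *\<^sub>R One)) (2 *\<^sub>R (One::'a)) \<inter> R g = R g" using sub by blast
  also have "measure lborel (R g) = real (card G) * (unit_ball_vol (DIM('a)) * r ^ DIM('a))"
    using R_emeasure[OF g] r_pos by (simp add: measure_def enn2real_mult ennreal_of_nat_eq_real_of_nat)
  also have "measure lborel (cbox (- (2 *\<^sub>R One)) (2 *\<^sub>R (One::'a))) = 4 ^ DIM('a)"
    by (simp add: measure_def cube_emeasure)
  finally show ?thesis .
qed

lemma expect_bound:
  fixes n :: nat
  assumes n: "n \<ge> 1"
    and q: "1 / real n \<le> real (card G) * (unit_ball_vol (DIM('a)) * r ^ DIM('a)) / 4 ^ DIM('a)"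
  shows "ennreal (real (card G) / 2) \<le>
    (\<integral>\<^sup>+ p. of_nat (num_faces 0 (inner_fence (p ` {..<n}) (cball (0::'a) 1))) \<partial>cube_sample n)"
proof -
  define H where "H g = {p \<in> space (cube_sample n). \<exists>i<n. p i \<in> R g}" for g
  have Hmeas: "H g \<in> sets (cube_sample n)" for g
  proof -
    have [measurable]: "R g \<in> sets borel" using R_borel by simp
    show ?thesis unfolding H_def cube_sample_def by measurable
  qed
  have "ennreal (real (card G) / 2) = ennreal (real (card G)) * ennreal (1/2)"
    by (subst ennreal_mult[symmetric]) auto
  also have "\<dots> = (\<Sum>g\<in>G. ennreal (1/2))"
    by (simp only: sum_constant ennreal_of_nat_eq_real_of_nat)
  also have "\<dots> \<le> (\<Sum>g\<in>G. emeasure (cube_sample n) (H g))"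
  proof (rule sum_mono)
    fix g assume g: "g \<in> G"
    show "ennreal (1/2) \<le> emeasure (cube_sample n) (H g)"
      unfolding H_def by (rule hit_prob) (use n q prob_R[OF g] R_borel in auto)
  qed
  also have "\<dots> = (\<Sum>g\<in>G. \<integral>\<^sup>+ p. indicator (H g) p \<partial>cube_sample n)"
    using Hmeas by simp
  also have "\<dots> = (\<integral>\<^sup>+ p. (\<Sum>g\<in>G. indicator (H g) p) \<partial>cube_sample n)"
    by (rule nn_integral_sum[symmetric]) (use Hmeas in auto)
  also have "\<dots> \<le> (\<integral>\<^sup>+ p. of_nat (num_faces 0 (inner_fence (p ` {..<n}) (cball (0::'a) 1))) \<partial>cube_sample n)"
  proof (rule nn_integral_mono)
    fix p :: "nat \<Rightarrow> 'a" assume p: "p \<in> space (cube_sample n)"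
    have "(\<Sum>g\<in>G. indicator (H g) p :: ennreal) = (\<Sum>g\<in>G. if p ` {..<n} \<inter> R g \<noteq> {} then 1 else 0)"
      by (intro sum.cong refl) (use p in \<open>auto simp: H_def indicator_def\<close>)
    also have "\<dots> = of_nat (card {g\<in>G. p ` {..<n} \<inter> R g \<noteq> {}})"
      using finG by (simp add: sum.If_cases Int_def)
    also have "\<dots> \<le> of_nat (num_faces 0 (inner_fence (p ` {..<n}) (cball (0::'a) 1)))"
    proof (intro of_nat_mono vertex_count)
      show "inner_admissible (p ` {..<n}) (cball 0 1) (inner_fence (p ` {..<n}) (cball (0::'a) 1))"
        by (rule inner_fence_adm) simp
      show "finite G" by (rule finG)
      show "\<And>i j v. i \<in> G \<Longrightarrow> j \<in> G \<Longrightarrow> v \<in> cball 0 1 \<Longrightarrow> 1 - hh \<le> u i \<bullet> v \<Longrightarrow> 1 - hh \<le> u j \<bullet> v \<Longrightarrow> i = j"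
        by (rule cap_disj)
      show "\<And>i x. i \<in> G \<Longrightarrow> x \<in> R i \<Longrightarrow> x \<in> cball 0 1 \<and> 1 - hh \<le> u i \<bullet> x"
        by (rule R_props)
    qed
    finally show "(\<Sum>g\<in>G. indicator (H g) p :: ennreal) \<le> of_nat (num_faces 0 (inner_fence (p ` {..<n}) (cball (0::'a) 1)))" .
  qed
  finally show ?thesis .
qed

end



lemma (in geo) cardG_lower: "(1 / (t * DIM('a))) ^ (DIM('a) - 1) \<le> real (card G)"
proof -
  have x: "0 \<le> 1 / (t * DIM('a))" using t_pos by simp
  have "1 / (t * DIM('a)) < real K + 1" unfolding K_def' using x by linarith
  then have "1 / (t * DIM('a)) \<le> real (2 * K + 1)" by simp
  then have "(1 / (t * DIM('a))) ^ (DIM('a) - 1) \<le> real (2 * K + 1) ^ (DIM('a) - 1)"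
    by (rule power_mono) (use x in auto)
  then show ?thesis by (simp add: cardG)
qed

lemma (in geo) q_lower:
  "t ^ (DIM('a) + 1) * (unit_ball_vol (DIM('a)) / (real DIM('a) ^ (DIM('a) - 1) * 256 ^ DIM('a)))
     \<le> real (card G) * (unit_ball_vol (DIM('a)) * r ^ DIM('a)) / 4 ^ DIM('a)"
proof -
  define D where "D = DIM('a)"
  have D1: "D \<ge> 1" by (simp add: D_def)
  define w where "w = unit_ball_vol (DIM('a))"
  have w: "w > 0" by (simp add: w_def)
  have tpow: "t ^ (2 * D) = t ^ (D + 1) * t ^ (D - 1)"
  proof -
    have "2 * D = (D + 1) + (D - 1)" using D1 by simp
    then show ?thesis by (metis power_add)
  qed
  have "t ^ (D + 1) * (w / (real D ^ (D - 1) * 256 ^ D))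
       = (1 / (t * D)) ^ (D - 1) * (w * (t^2/64) ^ D) / 4 ^ D"
  proof -
    have "(t^2/64) ^ D = t ^ (2 * D) / 64 ^ D" by (simp add: power_divide power_mult)
    moreover have "(256::real) ^ D = 64 ^ D * 4 ^ D" by (simp add: power_mult_distrib[symmetric])
    moreover have "(1 / (t * D)) ^ (D - 1) = 1 / (t ^ (D - 1) * real D ^ (D - 1))"
      by (simp add: power_divide power_mult_distrib)
    ultimately show ?thesis using t_pos D1 tpow by (simp add: field_simps)
  qed
  also have "\<dots> \<le> real (card G) * (w * r ^ D) / 4 ^ D"
  proof -
    have "(1 / (t * D)) ^ (D - 1) \<le> real (card G)" using cardG_lower by (simp add: D_def)
    moreover have r': "t^2/64 = r" by (simp add: r_def hh_def)
    ultimately show ?thesis unfolding r' using w r_pos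
      by (intro divide_right_mono mult_right_mono) auto
  qed
  finally show ?thesis by (simp add: D_def w_def)
qed




lemma lower_part:
  "\<exists>c>0. \<exists>N. \<forall>n\<ge>N.
      ennreal (c * real n powr (1 - 2 / (real DIM('a) + 1)))
        \<le> (\<integral>\<^sup>+ p. of_nat (num_faces 0 (inner_fence (p ` {..<n}) (cball (0::'a::euclidean_space) 1))) \<partial>cube_sample n)"
proof -
  obtain b0 :: 'a where b0: "b0 \<in> Basis" using nonempty_Basis by blast
  define DD where "DD = DIM('a)"
  have D1: "DD \<ge> 1" by (simp add: DD_def)
  define d where "d = real DD"
  have d1: "d \<ge> 1" using D1 by (simp add: d_def)
  define w where "w = unit_ball_vol (DIM('a))"
  have w: "w > 0" by (simp add: w_def)
  define \<alpha> where "\<alpha> = w / (d ^ (DD - 1) * 256 ^ DD)"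
  have \<alpha>: "\<alpha> > 0" using w d1 by (simp add: \<alpha>_def)
  define e where "e = (d - 1) / (d + 1)"
  define c where "c = (1/2) / d ^ (DD - 1) * \<alpha> powr e"
  have c: "c > 0" using \<alpha> d1 by (simp add: c_def)
  define N where "N = nat \<lceil>1 / \<alpha>\<rceil> + 1"
  have main: "ennreal (c * real n powr (1 - 2 / (real DIM('a) + 1)))
        \<le> (\<integral>\<^sup>+ p. of_nat (num_faces 0 (inner_fence (p ` {..<n}) (cball (0::'a) 1))) \<partial>cube_sample n)"
    if n: "n \<ge> N" for n
  proof -
    have n1: "n \<ge> 1" using n by (simp add: N_def)
    have "1 / \<alpha> < real n" using n unfolding N_def by linarith
    then have an: "1 \<le> \<alpha> * real n" using \<alpha> by (simp add: field_simps)
    define t where "t = (\<alpha> * real n) powr (- 1 / (d + 1))"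
    have t_pos: "0 < t" using an \<alpha> n1 by (simp add: t_def)
    have "1 \<le> (\<alpha> * real n) powr (1 / (d + 1))"
      by (rule ge_one_powr_ge_zero) (use an d1 in auto)
    moreover have tinv: "t = 1 / (\<alpha> * real n) powr (1 / (d + 1))"
      unfolding t_def by (simp add: powr_minus_divide[symmetric])
    ultimately have t_le: "t \<le> 1" by (auto simp: divide_le_eq)
    interpret geo t b0 using t_pos t_le b0 by unfold_locales
    have tD: "t ^ (DD + 1) = 1 / (\<alpha> * real n)"
    proof -
      have rd: "real (DD + 1) = d + 1" by (simp add: d_def)
      have "t ^ (DD + 1) = t powr (d + 1)" unfolding rd[symmetric] by (rule powr_realpow[symmetric, OF t_pos])
      also have "\<dots> = (\<alpha> * real n) powr (- 1)"
      proof -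
        have ex: "- 1 / (d + 1) * (d + 1) = - 1" using d1 by simp
        show ?thesis unfolding t_def powr_powr ex by (rule refl)
      qed
      also have "\<dots> = 1 / (\<alpha> * real n)" using an by (simp add: powr_minus_divide)
      finally show ?thesis .
    qed
    have q: "1 / real n \<le> real (card G) * (unit_ball_vol (DIM('a)) * r ^ DIM('a)) / 4 ^ DIM('a)"
    proof -
      have "1 / real n = t ^ (DD + 1) * \<alpha>" using tD \<alpha> by simp
      also have "\<dots> \<le> real (card G) * (unit_ball_vol (DIM('a)) * r ^ DIM('a)) / 4 ^ DIM('a)"
        using q_lower unfolding \<alpha>_def d_def DD_def w_def by simp
      finally show ?thesis .
    qed
    have "c * real n powr (1 - 2 / (real DIM('a) + 1)) = (1 / (t * DIM('a))) ^ (DIM('a) - 1) / 2"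
    proof -
      have e': "1 - 2 / (real DIM('a) + 1) = e" using d1 by (simp add: e_def d_def DD_def field_simps)
      have "(1 / t) ^ (DD - 1) = (\<alpha> * real n) powr e"
      proof -
        have "(1 / t) ^ (DD - 1) = ((\<alpha> * real n) powr (1 / (d + 1))) ^ (DD - 1)"
          by (simp add: tinv)
        also have "\<dots> = ((\<alpha> * real n) powr (1 / (d + 1))) powr (real (DD - 1))"
          by (rule powr_realpow[symmetric]) (use an \<alpha> n1 in simp)
        also have "\<dots> = (\<alpha> * real n) powr e"
          unfolding powr_powr e_def using D1 by (simp add: d_def of_nat_diff)
        finally show ?thesis .
      qed
      also have "\<dots> = \<alpha> powr e * real n powr e" using \<alpha> by (simp add: powr_mult)
      finally have te: "(1 / t) ^ (DD - 1) = \<alpha> powr e * real n powr e" .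
      have "(1 / (t * DIM('a))) ^ (DIM('a) - 1) = (1 / t) ^ (DD - 1) / d ^ (DD - 1)"
        by (simp add: DD_def d_def power_divide power_mult_distrib)
      then show ?thesis unfolding e' te c_def by simp
    qed
    also have "\<dots> \<le> real (card G) / 2" using cardG_lower by simp
    finally have "ennreal (c * real n powr (1 - 2 / (real DIM('a) + 1))) \<le> ennreal (real (card G) / 2)"
      by (rule ennreal_leI)
    also have "\<dots> \<le> (\<integral>\<^sup>+ p. of_nat (num_faces 0 (inner_fence (p ` {..<n}) (cball (0::'a) 1))) \<partial>cube_sample n)"
      by (rule expect_bound[OF n1 q])
    finally show ?thesis .
  qed
  show ?thesis using c main by blast
qed

theorem lemmaB4:
  shows "(\<forall>n. (\<integral>\<^sup>+ p. of_nat (num_faces 0 (inner_fence (p ` {..<n}) (cball (0::'a::euclidean_space) 1))) \<partial>cube_sample n)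
              \<le> (\<integral>\<^sup>+ p. of_nat (price (p ` {..<n}) (cball (0::'a) 1)) \<partial>cube_sample n))
       \<and> (\<exists>c>0. \<exists>N. \<forall>n\<ge>N.
            ennreal (c * real n powr (1 - 2 / (real DIM('a) + 1)))
              \<le> (\<integral>\<^sup>+ p. of_nat (num_faces 0 (inner_fence (p ` {..<n}) (cball (0::'a) 1))) \<partial>cube_sample n))"
proof
  show "\<forall>n. (\<integral>\<^sup>+ p. of_nat (num_faces 0 (inner_fence (p ` {..<n}) (cball (0::'a::euclidean_space) 1))) \<partial>cube_sample n)
              \<le> (\<integral>\<^sup>+ p. of_nat (price (p ` {..<n}) (cball (0::'a) 1)) \<partial>cube_sample n)"
    by (intro allI nn_integral_mono) (simp add: price_def)
  show "\<exists>c>0. \<exists>N. \<forall>n\<ge>N.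
            ennreal (c * real n powr (1 - 2 / (real DIM('a) + 1)))
              \<le> (\<integral>\<^sup>+ p. of_nat (num_faces 0 (inner_fence (p ` {..<n}) (cball (0::'a) 1))) \<partial>cube_sample n)"
    by (rule lower_part)
qed



end
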